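(* Let $0\le\alpha<1$ and let $r_0=r_0(\alpha)$ be the real root in $(0,1)$ of the equation \[2\big(1-\alpha+2(2-\alpha)r\big)(1-r)^4=1-\alpha+4r+(1+\alpha)r^2.\] Let $\mathcal{F}$ be the class of analytic functions $f(z)=z+\sum_{n\ge2}a_nz^n$ on $\mathbb{D}$ with $a_2=0$ and $|a_n|\le n$ for all $n\ge3$. Then every $f\in\mathcal{F}$ satisfies $\left|\frac{zf''(z)}{f'(z)}\right|\le1-\alpha$ for $|z|\le r_0$; $r_0(\alpha)$ is the radius of convexity of order $\alpha$ of $\mathcal{F}$; and $r_0(1/2)\approx0.125429$ is the radius of uniform convexity of $\mathcal{F}$. All results are sharp (in particular $r_0$ in the first statement cannot be replaced by any larger number).
   Context: $\mathbb{D}=\{z\in\mathbb{C}:|z|<1\}$. For a class $\mathcal{F}$ of analytic functions on $\mathbb{D}$ normalized by $f(0)=0$, $f'(0)=1$, and $0\le\alpha<1$, the radius of convexity of order $\alpha$ of $\mathcal{F}$ is the supremum of $r\in(0,1]$ such that every $f\in\mathcal{F}$ satisfies $f'(z)\ne0$ and $\operatorname{Re}\big(1+zf''(z)/f'(z)\big)>\alpha$ for $|z|<r$. The radius of uniform convexity of $\mathcal{F}$ is the supremum of $r\in(0,1]$ such that every $f\in\mathcal{F}$ satisfies $f'(z)\ne0$ and $\operatorname{Re}\big(1+zf''(z)/f'(z)\big)>\left|zf''(z)/f'(z)\right|$ for $|z|<r$. *)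

theory Defs
  imports "HOL-Analysis.Analysis"
begin

definition classF :: "(complex \<Rightarrow> complex) set" where
  "classF = {f. \<exists>a :: nat \<Rightarrow> complex.
      a 0 = 0 \<and> a 1 = 1 \<and> a 2 = 0 \<and> (\<forall>n\<ge>3. norm (a n) \<le> real n) \<and>
      (\<forall>z\<in>ball 0 1. (\<lambda>n. a n * z ^ n) sums f z)}"

definition radius_convexity_order :: "real \<Rightarrow> (complex \<Rightarrow> complex) set \<Rightarrow> real" where
  "radius_convexity_order \<alpha> F = Sup {r. 0 < r \<and> r \<le> 1 \<and>
      (\<forall>f\<in>F. \<forall>z. norm z < r \<longrightarrow>
          deriv f z \<noteq> 0 \<and>
          Re (1 + z * deriv (deriv f) z / deriv f z) > \<alpha>)}"

definition radius_uniform_convexity :: "(complex \<Rightarrow> complex) set \<Rightarrow> real" where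
  "radius_uniform_convexity F = Sup {r. 0 < r \<and> r \<le> 1 \<and>
      (\<forall>f\<in>F. \<forall>z. norm z < r \<longrightarrow>
          deriv f z \<noteq> 0 \<and>
          Re (1 + z * deriv (deriv f) z / deriv f z) > norm (z * deriv (deriv f) z / deriv f z))}"

end

theory Submission
  imports Defs "HOL-Analysis.Analysis"
begin


lemma A2: "(d::real) \<noteq> 0 \<Longrightarrow> 2/d^3 - 1/d^2 = (1 + (1-d))/d^3"
  by (simp add: field_simps eval_nat_numeral)
lemma A3: "(d::real) \<noteq> 0 \<Longrightarrow> 6/d^4 - 3*(2/d^3) + 1/d^2 = (1 + 4*(1-d) + (1-d)^2)/d^4"
  by (simp add: field_simps eval_nat_numeral)
lemma D3: "(d::real) \<noteq> 0 \<Longrightarrow> 6 * d^2 / d^6 = 6/d^4"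
  by (simp add: field_simps eval_nat_numeral)
lemma D2: "(d::real) \<noteq> 0 \<Longrightarrow> (2*d)/d^4 = 2/d^3"
  by (simp add: field_simps eval_nat_numeral)

lemma P1: fixes s :: real assumes "\<bar>s\<bar> < 1"
  shows "(\<lambda>n. real (Suc n) * s ^ n) sums (1 / (1 - s)^2)"
  using geometric_deriv_sums[of s] assms by simp

lemma P2: fixes s :: real assumes "\<bar>s\<bar> < 1"
  shows "(\<lambda>n. real (Suc n) * real (Suc (Suc n)) * s ^ n) sums (2 / (1 - s)^3)"
proof -
  have "(\<lambda>n. diffs (\<lambda>n. real (Suc n)) n * s^n) sums (2 / (1 - s)^3)"
  proof (rule termdiffs_sums_strong[where K=1])
    fix z :: real assume "norm z < 1"
    thus "(\<lambda>n. real (Suc n) * z^n) sums (1 / (1 - z)^2)" using P1 by simp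
  next
    show "((\<lambda>z. 1 / (1 - z)^2) has_field_derivative 2 / (1 - s)^3) (at s)"
      apply (insert assms)
      apply (rule derivative_eq_intros refl | simp)+
      using assms D2[of "1-s"] by (simp add: algebra_simps)
  qed (insert assms, auto)
  thus ?thesis unfolding diffs_def by (simp add: mult.commute)
qed

lemma P3: fixes s :: real assumes "\<bar>s\<bar> < 1"
  shows "(\<lambda>n. real (Suc n) * real (Suc (Suc n)) * real (Suc (Suc (Suc n))) * s ^ n) sums (6 / (1 - s)^4)"
proof -
  have "(\<lambda>n. diffs (\<lambda>n. real (Suc n) * real (Suc (Suc n))) n * s^n) sums (6 / (1 - s)^4)"
  proof (rule termdiffs_sums_strong[where K=1])
    fix z :: real assume "norm z < 1"
    thus "(\<lambda>n. real (Suc n) * real (Suc (Suc n)) * z^n) sums (2 / (1 - z)^3)" using P2 by simp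
  next
    show "((\<lambda>z. 2 / (1 - z)^3) has_field_derivative 6 / (1 - s)^4) (at s)"
      apply (insert assms)
      apply (rule derivative_eq_intros refl | simp)+
      using assms D3[of "1-s"] by simp
  qed (insert assms, auto)
  thus ?thesis unfolding diffs_def by (simp add: mult.commute mult.left_commute)
qed

definition bB :: "real \<Rightarrow> nat \<Rightarrow> real" where "bB s n = (real n + 3)^2 * s^(n+2)"
definition aA :: "real \<Rightarrow> nat \<Rightarrow> real" where "aA s n = (real n + 2) * (real n + 3)^2 * s^(n+2)"

lemma S2: fixes s :: real assumes "\<bar>s\<bar> < 1"
  shows "(\<lambda>n. (real n + 1)^2 * s ^ n) sums ((1 + s) / (1 - s)^3)"
proof -
  have "(\<lambda>n. real (Suc n) * real (Suc (Suc n)) * s ^ n - real (Suc n) * s ^ n) sums (2 / (1 - s)^3 - 1 / (1 - s)^2)"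
    by (intro sums_diff P1 P2 assms)
  moreover have "2 / (1 - s)^3 - 1 / (1 - s)^2 = (1 + s) / (1 - s)^3"
    using assms A2[of "1-s"] by simp
  ultimately show ?thesis by (simp add: algebra_simps power2_eq_square)
qed

lemma S3: fixes s :: real assumes "\<bar>s\<bar> < 1"
  shows "(\<lambda>n. (real n + 1)^3 * s ^ n) sums ((1 + 4 * s + s ^ 2) / (1 - s)^4)"
proof -
  have "(\<lambda>n. real (Suc n) * real (Suc (Suc n)) * real (Suc (Suc (Suc n))) * s ^ n - 3 * (real (Suc n) * real (Suc (Suc n)) * s ^ n) + real (Suc n) * s ^ n) sums (6 / (1 - s)^4 - 3 * (2 / (1 - s)^3) + 1 / (1 - s)^2)"
    by (intro sums_diff sums_add sums_mult P1 P2 P3 assms)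
  moreover have "6 / (1 - s)^4 - 3 * (2 / (1 - s)^3) + 1 / (1 - s)^2 = (1 + 4 * s + s ^ 2) / (1 - s)^4"
    using assms A3[of "1-s"] by simp
  ultimately show ?thesis by (simp add: algebra_simps power3_eq_cube)
qed

lemma bB_sums: fixes s :: real assumes "\<bar>s\<bar> < 1"
  shows "bB s sums ((1 + s) / (1 - s)^3 - 1 - 4 * s)"
proof -
  have "(\<lambda>i. (real (i+2) + 1)^2 * s ^ (i+2)) sums ((1 + s) / (1 - s)^3 - (\<Sum>i<2. (real i + 1)^2 * s ^ i))"
    using sums_iff_shift[of "\<lambda>n. (real n + 1)^2 * s ^ n" 2] S2[OF assms] by simp
  moreover have "(\<Sum>i<2. (real i + 1)^2 * s ^ i) = 1 + 4 * s" by (simp add: eval_nat_numeral)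
  ultimately show ?thesis unfolding bB_def by (simp add: add.commute add.left_commute diff_diff_eq)
qed

lemma aA_sums: fixes s :: real assumes "\<bar>s\<bar> < 1"
  shows "aA s sums ((1 + 4 * s + s ^ 2) / (1 - s)^4 - (1 + s) / (1 - s)^3 - 4 * s)"
proof -
  have "(\<lambda>i. (real (i+2) + 1)^3 * s ^ (i+2)) sums ((1 + 4 * s + s ^ 2) / (1 - s)^4 - (\<Sum>i<2. (real i + 1)^3 * s ^ i))"
    using sums_iff_shift[of "\<lambda>n. (real n + 1)^3 * s ^ n" 2] S3[OF assms] by simp
  moreover have "(\<Sum>i<2. (real i + 1)^3 * s ^ i) = 1 + 8 * s" by (simp add: eval_nat_numeral)
  ultimately have "(\<lambda>i. (real i + 3)^3 * s ^ (i+2)) sums ((1 + 4 * s + s ^ 2) / (1 - s)^4 - 1 - 8 * s)"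
    by (simp add: add.commute add.left_commute diff_diff_eq)
  from sums_diff[OF this bB_sums[OF assms]]
  show ?thesis unfolding bB_def aA_def
    by (simp add: algebra_simps power2_eq_square power3_eq_cube)
qed



definition hB :: "real \<Rightarrow> real" where "hB s = suminf (bB s)"
definition hA :: "real \<Rightarrow> real" where "hA s = suminf (aA s)"

lemma hB_eq: "\<bar>s\<bar> < 1 \<Longrightarrow> hB s = (1 + s) / (1 - s)^3 - 1 - 4 * s"
  unfolding hB_def using bB_sums sums_unique by metis
lemma hA_eq: "\<bar>s\<bar> < 1 \<Longrightarrow> hA s = (1 + 4 * s + s ^ 2) / (1 - s)^4 - (1 + s) / (1 - s)^3 - 4 * s"
  unfolding hA_def using aA_sums sums_unique by metis
lemma bB_summ: "\<bar>s\<bar> < 1 \<Longrightarrow> summable (bB s)" using bB_sums sums_summable by blast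
lemma aA_summ: "\<bar>s\<bar> < 1 \<Longrightarrow> summable (aA s)" using aA_sums sums_summable by blast

lemma g_eq:
  fixes \<alpha> s :: real assumes "s < 1"
  shows "2 * (1 - \<alpha> + 2 * (2 - \<alpha>) * s) * (1 - s) ^ 4 - (1 - \<alpha> + 4 * s + (1 + \<alpha>) * s ^ 2)
     = (1 - s)^4 * (1 - \<alpha> - (((1 + 4 * s + s ^ 2) / (1 - s)^4 - (1 + s) / (1 - s)^3 - 4 * s)
          + (1 - \<alpha>) * ((1 + s) / (1 - s)^3 - 1 - 4 * s)))"
proof -
  have d: "1 - s \<noteq> 0" using assms by simp
  have e1: "(1 - s)^4 * ((1 + 4 * s + s ^ 2) / (1 - s)^4) = 1 + 4 * s + s ^ 2" using d by simp
  have gen: "\<And>D X Y::real. D * (1 - \<alpha> - ((X - Y - 4 * s) + (1 - \<alpha>) * (Y - 1 - 4 * s)))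
     = D * (1 - \<alpha>) - D * X + \<alpha> * (D * Y) + D * (4 * s) + (1 - \<alpha>) * D * (1 + 4 * s)"
    by (simp add: algebra_simps)
  have p4: "(1 - s)^4 = (1 - s) * (1 - s)^3" by (simp add: eval_nat_numeral)
  have e2: "(1 - s)^4 * ((1 + s) / (1 - s)^3) = (1 + s) * (1 - s)" using d
    unfolding p4 by simp
  have "(1 - s)^4 * (1 - \<alpha> - (((1 + 4 * s + s ^ 2) / (1 - s)^4 - (1 + s) / (1 - s)^3 - 4 * s)
          + (1 - \<alpha>) * ((1 + s) / (1 - s)^3 - 1 - 4 * s)))
     = (1 - s)^4 * (1 - \<alpha>) - (1 - s)^4 * ((1 + 4 * s + s ^ 2) / (1 - s)^4)
       + \<alpha> * ((1 - s)^4 * ((1 + s) / (1 - s)^3)) + (1 - s)^4 * (4 * s)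
       + (1 - \<alpha>) * (1 - s)^4 * (1 + 4 * s)"
    by (rule gen)
  also have "\<dots> = (1 - s)^4 * (1 - \<alpha>) - (1 + 4 * s + s ^ 2)
       + \<alpha> * ((1 + s) * (1 - s)) + (1 - s)^4 * (4 * s)
       + (1 - \<alpha>) * (1 - s)^4 * (1 + 4 * s)" by (simp only: e1 e2)
  also have "\<dots> = 2 * (1 - \<alpha> + 2 * (2 - \<alpha>) * s) * (1 - s) ^ 4 - (1 - \<alpha> + 4 * s + (1 + \<alpha>) * s ^ 2)"
    by (simp add: algebra_simps power2_eq_square)
  finally show ?thesis by simp
qed

definition HH :: "real \<Rightarrow> real \<Rightarrow> real" where "HH \<alpha> s = hA s + (1 - \<alpha>) * hB s"

lemma g_HH:
  fixes \<alpha> s :: real assumes "0 \<le> s" "s < 1"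
  shows "2 * (1 - \<alpha> + 2 * (2 - \<alpha>) * s) * (1 - s) ^ 4 - (1 - \<alpha> + 4 * s + (1 + \<alpha>) * s ^ 2)
     = (1 - s)^4 * (1 - \<alpha> - HH \<alpha> s)"
  using g_eq[OF assms(2), of \<alpha>] assms unfolding HH_def by (simp add: hA_eq hB_eq)

lemma hB_nonneg: "0 \<le> s \<Longrightarrow> s < 1 \<Longrightarrow> 0 \<le> hB s"
  unfolding hB_def by (intro suminf_nonneg bB_summ) (auto simp: bB_def)
lemma hA_nonneg: "0 \<le> s \<Longrightarrow> s < 1 \<Longrightarrow> 0 \<le> hA s"
  unfolding hA_def by (intro suminf_nonneg aA_summ) (auto simp: aA_def)
lemma hA_pos: "0 < s \<Longrightarrow> s < 1 \<Longrightarrow> 0 < hA s"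
  unfolding hA_def by (intro suminf_pos aA_summ) (auto simp: aA_def)

lemma hB_mono: assumes "0 \<le> s" "s \<le> t" "t < 1" shows "hB s \<le> hB t"
proof -
  have pw: "s ^ (n+2) \<le> t ^ (n+2)" for n using assms by (intro power_mono) auto
  show ?thesis unfolding hB_def using assms
    by (intro suminf_le bB_summ) (auto simp: bB_def intro!: mult_left_mono pw simp del: power_Suc)
qed

lemma HH_strict: assumes "0 \<le> \<alpha>" "\<alpha> < 1" "0 \<le> s" "s < t" "t < 1" shows "HH \<alpha> s < HH \<alpha> t"
proof -
  let ?d = "\<lambda>n. (aA t n - aA s n) + (1 - \<alpha>) * (bB t n - bB s n)"
  have sA: "\<bar>s\<bar> < 1" "\<bar>t\<bar> < 1" using assms by auto
  have s1: "(\<lambda>n. aA t n - aA s n) sums (hA t - hA s)"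
    unfolding hA_def using sA by (intro sums_diff summable_sums aA_summ)
  have s2: "(\<lambda>n. bB t n - bB s n) sums (hB t - hB s)"
    unfolding hB_def using sA by (intro sums_diff summable_sums bB_summ)
  have sm: "?d sums (HH \<alpha> t - HH \<alpha> s)"
    using sums_add[OF s1 sums_mult[OF s2, of "1 - \<alpha>"]] unfolding HH_def by (simp add: algebra_simps)
  have pw: "s ^ (n+2) \<le> t ^ (n+2)" for n using assms by (intro power_mono) auto
  have nn: "0 \<le> ?d n" for n
  proof -
    have "aA s n \<le> aA t n" unfolding aA_def using pw[of n] by (intro mult_left_mono) auto
    moreover have "bB s n \<le> bB t n" unfolding bB_def using pw[of n] by (intro mult_left_mono) auto
    ultimately show ?thesis using assms by auto
  qed
  have "s ^ 2 < t ^ 2" using assms by (intro power_strict_mono) auto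
  hence "aA s 0 < aA t 0" unfolding aA_def by (simp add: power2_eq_square)
  moreover have "bB s 0 \<le> bB t 0" unfolding bB_def using pw[of 0] by simp
  ultimately have "0 < ?d 0" using assms by (smt (verit) mult_nonneg_nonneg)
  hence "0 < suminf ?d" using suminf_pos_iff[OF sums_summable[OF sm] nn] by blast
  thus ?thesis using sums_unique[OF sm] by simp
qed



lemma powser_deriv:
  fixes c :: "nat \<Rightarrow> complex"
  assumes sm: "\<And>z. norm z < 1 \<Longrightarrow> summable (\<lambda>n. c n * z^n)"
     and eq: "\<And>z. norm z < 1 \<Longrightarrow> g z = (\<Sum>n. c n * z^n)"
     and w: "norm w < 1"
  shows "deriv g w = (\<Sum>n. diffs c n * w^n)"
proof -
  have "((\<lambda>z. \<Sum>n. c n * z^n) has_field_derivative (\<Sum>n. diffs c n * w^n)) (at w)"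
    by (rule termdiffs_strong'[OF sm w])
  then have "(g has_field_derivative (\<Sum>n. diffs c n * w^n)) (at w)"
    by (rule has_field_derivative_transform_within_open[where S="ball 0 1"]) (use w eq in auto)
  thus ?thesis by (rule DERIV_imp_deriv)
qed

lemma series_repr:
  fixes a :: "nat \<Rightarrow> complex"
  assumes a1: "a 1 = 1" and a2: "a 2 = 0"
    and S: "\<forall>z\<in>ball 0 1. (\<lambda>n. a n * z ^ n) sums f z" and z: "norm z < 1"
  shows "(\<lambda>i. diffs a (i+2) * z^(i+2)) sums (deriv f z - 1)"
    and "(\<lambda>i. z * (diffs (diffs a) (i+1) * z^(i+1))) sums (z * deriv (deriv f) z)"
proof -
  have sm: "summable (\<lambda>n. a n * w^n)" if "norm w < 1" for w
  proof -
    have "w \<in> ball 0 1" using that by simp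
    thus ?thesis using sums_summable S by blast
  qed
  have eq: "f w = (\<Sum>n. a n * w^n)" if "norm w < 1" for w
  proof -
    have "w \<in> ball 0 1" using that by simp
    thus ?thesis using sums_unique S by metis
  qed
  have sm1: "summable (\<lambda>n. diffs a n * w^n)" if "norm w < 1" for w
    by (rule termdiff_converges[of w 1]) (use that sm in auto)
  have d1: "deriv f w = (\<Sum>n. diffs a n * w^n)" if "norm w < 1" for w
    by (rule powser_deriv[OF sm eq that])
  have d2: "deriv (deriv f) z = (\<Sum>n. diffs (diffs a) n * z^n)"
    by (rule powser_deriv[OF sm1 d1 z])
  have sm2: "summable (\<lambda>n. diffs (diffs a) n * z^n)"
    by (rule termdiff_converges[of z 1]) (use z sm1 in auto)
  have "(\<lambda>n. diffs a n * z^n) sums deriv f z" using d1[OF z] sm1[OF z] by (simp add: summable_sums)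
  then have "(\<lambda>i. diffs a (i+2) * z^(i+2)) sums (deriv f z - (\<Sum>i<2. diffs a i * z^i))"
    using sums_iff_shift[of "\<lambda>n. diffs a n * z^n" 2] by simp
  moreover have "(\<Sum>i<2. diffs a i * z^i) = 1"
    using a1 a2 by (simp add: diffs_def eval_nat_numeral)
  ultimately show "(\<lambda>i. diffs a (i+2) * z^(i+2)) sums (deriv f z - 1)" by simp
  have "(\<lambda>n. diffs (diffs a) n * z^n) sums deriv (deriv f) z" using d2 sm2 by (simp add: summable_sums)
  then have "(\<lambda>i. diffs (diffs a) (i+1) * z^(i+1)) sums (deriv (deriv f) z - (\<Sum>i<1. diffs (diffs a) i * z^i))"
    using sums_iff_shift[of "\<lambda>n. diffs (diffs a) n * z^n" 1] by simp
  moreover have "(\<Sum>i<1. diffs (diffs a) i * z^i) = 0"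
    using a2 by (simp add: diffs_def eval_nat_numeral)
  ultimately have "(\<lambda>i. diffs (diffs a) (i+1) * z^(i+1)) sums (deriv (deriv f) z)" by simp
  from sums_mult[OF this, of z]
  show "(\<lambda>i. z * (diffs (diffs a) (i+1) * z^(i+1))) sums (z * deriv (deriv f) z)" .
qed

lemma norm_sums_le:
  fixes w :: "nat \<Rightarrow> complex"
  assumes "w sums S" "summable g" "\<And>i. norm (w i) \<le> g i"
  shows "norm S \<le> suminf g"
proof -
  have sn: "summable (\<lambda>i. norm (w i))"
    by (rule summable_comparison_test[OF _ assms(2)]) (use assms(3) in auto)
  have "norm S = norm (suminf w)" using assms(1) sums_unique by metis
  also have "\<dots> \<le> (\<Sum>i. norm (w i))" by (rule summable_norm[OF sn])
  also have "\<dots> \<le> suminf g" by (rule suminf_le[OF assms(3) sn assms(2)])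
  finally show ?thesis .
qed

lemma classF_bounds:
  assumes "f \<in> classF" "norm z < 1"
  shows "norm (deriv f z - 1) \<le> hB (norm z)" "norm (z * deriv (deriv f) z) \<le> hA (norm z)"
proof -
  obtain a :: "nat \<Rightarrow> complex" where a: "a 0 = 0" "a 1 = 1" "a 2 = 0" "\<forall>n\<ge>3. norm (a n) \<le> real n"
    "\<forall>z\<in>ball 0 1. (\<lambda>n. a n * z ^ n) sums f z"
    using assms(1) unfolding classF_def by blast
  let ?s = "norm z"
  have s: "\<bar>?s\<bar> < 1" using assms by simp
  have an: "norm (a (i+3)) \<le> real i + 3" for i using a(4)[rule_format, of "i+3"] by simp
  have nc: "cmod (of_nat i + 3) = real i + 3" for i using norm_of_nat[of "i+3", where 'a=complex] by (simp add: add.commute)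
  have nc2: "cmod (of_nat i + 2) = real i + 2" for i using norm_of_nat[of "i+2", where 'a=complex] by (simp add: add.commute)
  have nc3: "cmod (3 + of_nat i) = real i + 3" for i using nc[of i] by (simp add: add.commute)
  have nc4: "cmod (2 + of_nat i) = real i + 2" for i using nc2[of i] by (simp add: add.commute)
  have i3: "i + 3 = Suc (Suc (Suc i))" for i by simp
  note R = series_repr[OF a(2) a(3) a(5) assms(2)]
  show "norm (deriv f z - 1) \<le> hB ?s" unfolding hB_def
  proof (rule norm_sums_le[OF R(1) bB_summ[OF s]])
    fix i
    have e: "diffs a (i+2) = of_nat (i+3) * (a (i+3)::complex)"
      unfolding diffs_def by (simp add: eval_nat_numeral)
    have "norm (diffs a (i+2) * z^(i+2)) = (real i + 3) * norm (a (i+3)) * ?s^(i+2)"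
      unfolding e norm_mult norm_power norm_of_nat by simp
    also have "\<dots> \<le> (real i + 3) * (real i + 3) * ?s^(i+2)"
      using an[of i] by (intro mult_right_mono mult_left_mono) auto
    finally show "norm (diffs a (i+2) * z^(i+2)) \<le> bB ?s i" unfolding bB_def by (simp add: power2_eq_square)
  qed
  show "norm (z * deriv (deriv f) z) \<le> hA ?s" unfolding hA_def
  proof (rule norm_sums_le[OF R(2) aA_summ[OF s]])
    fix i
    have e: "diffs (diffs a) (i+1) = of_nat (i+2) * (of_nat (i+3) * (a (i+3)::complex))"
      unfolding diffs_def by (simp add: eval_nat_numeral)
    have "norm (z * (diffs (diffs a) (i+1) * z^(i+1))) = (real i + 2) * (real i + 3) * norm (a (i+3)) * ?s^(i+2)"
      unfolding e norm_mult norm_power norm_of_nat by (simp add: algebra_simps)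
    also have "\<dots> \<le> (real i + 2) * (real i + 3) * (real i + 3) * ?s^(i+2)"
      using an[of i] by (intro mult_right_mono mult_left_mono) auto
    finally show "norm (z * (diffs (diffs a) (i+1) * z^(i+1))) \<le> aA ?s i" unfolding aA_def by (simp add: power2_eq_square algebra_simps)
  qed
qed



definition a0 :: "nat \<Rightarrow> complex" where
  "a0 n = (if n = 1 then 1 else if n \<le> 2 then 0 else - of_nat n)"
definition f0 :: "complex \<Rightarrow> complex" where "f0 z = (\<Sum>n. a0 n * z^n)"

lemma a0_norm: "norm (a0 n) \<le> real (Suc n)"
  unfolding a0_def by auto

lemma f0_sums: assumes "norm z < 1" shows "(\<lambda>n. a0 n * z^n) sums f0 z"
proof -
  have nz: "\<bar>norm z\<bar> < 1" using assms by simp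
  have sg: "summable (\<lambda>n. real (Suc n) * norm z ^ n)" by (rule sums_summable[OF P1[OF nz]])
  have le: "norm (a0 n * z^n) \<le> real (Suc n) * norm z ^ n" for n
    unfolding norm_mult norm_power by (intro mult_right_mono a0_norm) simp
  have "summable (\<lambda>n. a0 n * z^n)"
    by (rule summable_comparison_test'[OF sg le])
  thus ?thesis unfolding f0_def by (simp add: summable_sums)
qed

lemma f0_classF: "f0 \<in> classF"
proof -
  have S: "\<forall>z\<in>ball 0 1. (\<lambda>n. a0 n * z ^ n) sums f0 z" using f0_sums by auto
  have "a0 0 = 0 \<and> a0 1 = 1 \<and> a0 2 = 0 \<and> (\<forall>n\<ge>3. norm (a0 n) \<le> real n)"
    by (auto simp: a0_def)
  thus ?thesis unfolding classF_def using S by blast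
qed

lemma f0_vals:
  assumes "0 \<le> t" "t < 1"
  shows "deriv f0 (of_real t) = 1 - of_real (hB t)"
    and "of_real t * deriv (deriv f0) (of_real t) = - of_real (hA t)"
proof -
  have S: "\<forall>z\<in>ball 0 1. (\<lambda>n. a0 n * z ^ n) sums f0 z" using f0_sums by auto
  have z: "norm (complex_of_real t) < 1" using assms by simp
  have s: "\<bar>t\<bar> < 1" using assms by simp
  have a01: "a0 1 = 1" "a0 2 = 0" by (simp_all add: a0_def)
  note R = series_repr[OF a01 S z]
  have d1: "diffs a0 (i+2) = - (of_nat (i+3) * of_nat (i+3))" for i
    unfolding diffs_def a0_def by (simp add: eval_nat_numeral) (simp add: algebra_simps)
  have d2: "diffs (diffs a0) (i+1) = - (of_nat (i+2) * (of_nat (i+3) * of_nat (i+3)))" for i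
    unfolding diffs_def a0_def by (simp add: eval_nat_numeral) (simp add: algebra_simps)
  have e1: "diffs a0 (i+2) * (of_real t)^(i+2) = - of_real (bB t i)" for i
    unfolding d1 bB_def by (simp add: power2_eq_square)
  have e2: "of_real t * (diffs (diffs a0) (i+1) * (of_real t)^(i+1)) = - of_real (aA t i)" for i
    unfolding d2 aA_def by (simp add: power2_eq_square mult_ac)
  have "(\<lambda>i. - of_real (bB t i)) sums (deriv f0 (of_real t) - 1)"
    using R(1) unfolding e1 .
  moreover have "(\<lambda>i. - complex_of_real (bB t i)) sums (- of_real (hB t))"
    unfolding hB_def by (intro sums_minus sums_of_real summable_sums bB_summ s)
  ultimately have "deriv f0 (of_real t) - 1 = - of_real (hB t)"
    by (rule sums_unique2)
  thus "deriv f0 (of_real t) = 1 - of_real (hB t)" by (simp add: algebra_simps)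
  have "(\<lambda>i. - of_real (aA t i)) sums (of_real t * deriv (deriv f0) (of_real t))"
    using R(2) unfolding e2 .
  moreover have "(\<lambda>i. - complex_of_real (aA t i)) sums (- of_real (hA t))"
    unfolding hA_def by (intro sums_minus sums_of_real summable_sums aA_summ s)
  ultimately show "of_real t * deriv (deriv f0) (of_real t) = - of_real (hA t)"
    by (rule sums_unique2)
qed



lemma key_bound:
  assumes "f \<in> classF" "norm z < 1" "hB (norm z) < 1"
  shows "deriv f z \<noteq> 0"
    and "norm (z * deriv (deriv f) z / deriv f z) * (1 - hB (norm z)) \<le> hA (norm z)"
proof -
  have b1: "norm (deriv f z - 1) \<le> hB (norm z)" and b2: "norm (z * deriv (deriv f) z) \<le> hA (norm z)"
    using classF_bounds[OF assms(1,2)] by auto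
  have "1 - hB (norm z) \<le> norm (deriv f z)"
    using b1 norm_triangle_ineq2[of 1 "deriv f z"] norm_minus_commute[of "deriv f z" 1] by simp
  hence lo: "1 - hB (norm z) \<le> norm (deriv f z)" .
  thus nz: "deriv f z \<noteq> 0" using assms(3) by auto
  have "norm (z * deriv (deriv f) z / deriv f z) * (1 - hB (norm z))
      \<le> norm (z * deriv (deriv f) z / deriv f z) * norm (deriv f z)"
    by (intro mult_left_mono lo) simp
  also have "\<dots> = norm (z * deriv (deriv f) z)" using nz by (simp add: norm_divide)
  also have "\<dots> \<le> hA (norm z)" by (rule b2)
  finally show "norm (z * deriv (deriv f) z / deriv f z) * (1 - hB (norm z)) \<le> hA (norm z)" .
qed

definition Bc :: "real \<Rightarrow> real" where "Bc x = (1 + x) / (1 - x)^3 - 1 - 4 * x"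

lemma main_facts:
  fixes \<alpha> r0 :: real
  assumes a0: "0 \<le> \<alpha>" and a1: "\<alpha> < 1" and r0: "0 < r0" "r0 < 1"
    and eq: "2 * (1 - \<alpha> + 2 * (2 - \<alpha>) * r0) * (1 - r0) ^ 4 = 1 - \<alpha> + 4 * r0 + (1 + \<alpha>) * r0 ^ 2"
  shows "HH \<alpha> r0 = 1 - \<alpha>" and "hB r0 < 1"
proof -
  have "(1 - r0)^4 * (1 - \<alpha> - HH \<alpha> r0) = 0" using g_HH[of r0 \<alpha>] r0 eq by simp
  moreover have "(1 - r0)^4 \<noteq> 0" using r0 by simp
  ultimately show H: "HH \<alpha> r0 = 1 - \<alpha>" by simp
  have "0 < hA r0" using hA_pos r0 by auto
  hence "(1 - \<alpha>) * hB r0 < (1 - \<alpha>) * 1" using H unfolding HH_def by simp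
  thus "hB r0 < 1" using a1 by simp
qed

lemma part1:
  fixes \<alpha> r0 :: real
  assumes a0: "0 \<le> \<alpha>" and a1: "\<alpha> < 1" and r0: "0 < r0" "r0 < 1"
    and eq: "2 * (1 - \<alpha> + 2 * (2 - \<alpha>) * r0) * (1 - r0) ^ 4 = 1 - \<alpha> + 4 * r0 + (1 + \<alpha>) * r0 ^ 2"
    and f: "f \<in> classF" and z: "norm z \<le> r0"
  shows "deriv f z \<noteq> 0" "norm (z * deriv (deriv f) z / deriv f z) \<le> 1 - \<alpha>"
    "norm z < r0 \<Longrightarrow> norm (z * deriv (deriv f) z / deriv f z) < 1 - \<alpha>"
proof -
  note M = main_facts[OF assms(1-5)]
  let ?s = "norm z" and ?w = "norm (z * deriv (deriv f) z / deriv f z)"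
  have z1: "?s < 1" using z r0 by simp
  have hBs: "hB ?s < 1" using hB_mono[of ?s r0] M(2) z r0 by simp
  note K = key_bound[OF f z1 hBs]
  show "deriv f z \<noteq> 0" by (rule K(1))
  have HHle: "HH \<alpha> ?s \<le> 1 - \<alpha>"
  proof (cases "?s = r0")
    case True thus ?thesis using M(1) by simp
  next
    case False thus ?thesis using HH_strict[OF a0 a1, of ?s r0] M(1) z r0 by simp
  qed
  have pos: "0 < 1 - hB ?s" using hBs by simp
  have "?w * (1 - hB ?s) \<le> (1 - \<alpha>) * (1 - hB ?s)"
    using K(2) HHle unfolding HH_def by (simp add: algebra_simps)
  thus "?w \<le> 1 - \<alpha>" using pos by (simp add: mult_le_cancel_right)
  assume lt: "?s < r0"
  have "HH \<alpha> ?s < 1 - \<alpha>" using HH_strict[OF a0 a1, of ?s r0] M(1) lt r0 by simp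
  hence "?w * (1 - hB ?s) < (1 - \<alpha>) * (1 - hB ?s)"
    using K(2) unfolding HH_def by (simp add: algebra_simps)
  thus "?w < 1 - \<alpha>" using pos by (simp add: mult_less_cancel_right)
qed

lemma witness:
  fixes \<alpha> r0 :: real
  assumes a0: "0 \<le> \<alpha>" and a1: "\<alpha> < 1" and r0: "0 < r0" "r0 < 1"
    and eq: "2 * (1 - \<alpha> + 2 * (2 - \<alpha>) * r0) * (1 - r0) ^ 4 = 1 - \<alpha> + 4 * r0 + (1 + \<alpha>) * r0 ^ 2"
    and r: "r0 < r"
  shows "\<exists>t. 0 \<le> t \<and> t < r \<and> t < 1 \<and>
    (deriv f0 (of_real t) = 0 \<or> (\<exists>c. c > 1 - \<alpha> \<and>
       of_real t * deriv (deriv f0) (of_real t) / deriv f0 (of_real t) = - of_real c))"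
proof -
  note M = main_facts[OF assms(1-5)]
  define t1 where "t1 = (r0 + min r 1) / 2"
  have t1: "r0 < t1" "t1 < r" "t1 < 1" using r r0 unfolding t1_def by auto
  show ?thesis
  proof (cases "hB t1 < 1")
    case True
    have D: "deriv f0 (of_real t1) = of_real (1 - hB t1)" using f0_vals(1)[of t1] t1 r0 by simp
    have N: "of_real t1 * deriv (deriv f0) (of_real t1) = - of_real (hA t1)" using f0_vals(2)[of t1] t1 r0 by simp
    have HHg: "HH \<alpha> t1 > 1 - \<alpha>" using HH_strict[OF a0 a1, of r0 t1] M(1) t1 r0 by simp
    have pos: "0 < 1 - hB t1" using True by simp
    define c where "c = hA t1 / (1 - hB t1)"
    have "(1 - \<alpha>) * (1 - hB t1) < hA t1" using HHg unfolding HH_def by (simp add: algebra_simps)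
    hence cgt: "c > 1 - \<alpha>" unfolding c_def using pos by (simp add: pos_less_divide_eq)
    have "of_real t1 * deriv (deriv f0) (of_real t1) / deriv f0 (of_real t1) = - of_real c"
      unfolding D N c_def by simp
    thus ?thesis using t1 r0 cgt by (intro exI[of _ t1]) auto
  next
    case False
    have cont: "continuous_on {r0..t1} Bc" unfolding Bc_def using t1
      by (intro continuous_intros) auto
    have Br0: "Bc r0 < 1" using M(2) hB_eq[of r0] r0 unfolding Bc_def by simp
    have Bt1: "1 \<le> Bc t1" using False hB_eq[of t1] t1 r0 unfolding Bc_def by simp
    obtain t where t: "r0 \<le> t" "t \<le> t1" "Bc t = 1"
      using IVT'[of Bc r0 1 t1, OF less_imp_le[OF Br0] Bt1 _ cont] t1 by auto
    have "hB t = 1" using hB_eq[of t] t t1 r0 unfolding Bc_def by simp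
    hence "deriv f0 (of_real t) = 0" using f0_vals(1)[of t] t t1 r0 by simp
    thus ?thesis using t t1 r0 by (intro exI[of _ t]) auto
  qed
qed



lemma g_sign:
  fixes \<alpha> r0 x :: real
  assumes a0: "0 \<le> \<alpha>" and a1: "\<alpha> < 1" and r0: "0 < r0" "r0 < 1"
    and eq: "2 * (1 - \<alpha> + 2 * (2 - \<alpha>) * r0) * (1 - r0) ^ 4 = 1 - \<alpha> + 4 * r0 + (1 + \<alpha>) * r0 ^ 2"
    and x: "0 \<le> x" "x < 1"
  shows "x \<le> r0 \<Longrightarrow> 2 * (1 - \<alpha> + 2 * (2 - \<alpha>) * x) * (1 - x) ^ 4 - (1 - \<alpha> + 4 * x + (1 + \<alpha>) * x ^ 2) \<ge> 0"
    and "r0 \<le> x \<Longrightarrow> 2 * (1 - \<alpha> + 2 * (2 - \<alpha>) * x) * (1 - x) ^ 4 - (1 - \<alpha> + 4 * x + (1 + \<alpha>) * x ^ 2) \<le> 0"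
proof -
  note M = main_facts[OF assms(1-5)]
  have G: "2 * (1 - \<alpha> + 2 * (2 - \<alpha>) * x) * (1 - x) ^ 4 - (1 - \<alpha> + 4 * x + (1 + \<alpha>) * x ^ 2) = (1 - x)^4 * (1 - \<alpha> - HH \<alpha> x)"
    by (rule g_HH[OF x])
  have p: "0 \<le> (1 - x)^4" using x by simp
  { assume "x \<le> r0"
    hence "HH \<alpha> x \<le> 1 - \<alpha>" using HH_strict[OF a0 a1, of x r0] M(1) x r0
      by (cases "x = r0") auto
    thus "2 * (1 - \<alpha> + 2 * (2 - \<alpha>) * x) * (1 - x) ^ 4 - (1 - \<alpha> + 4 * x + (1 + \<alpha>) * x ^ 2) \<ge> 0"
      unfolding G using p by simp }
  { assume "r0 \<le> x"
    hence "HH \<alpha> x \<ge> 1 - \<alpha>" using HH_strict[OF a0 a1, of r0 x] M(1) x r0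
      by (cases "x = r0") auto
    thus "2 * (1 - \<alpha> + 2 * (2 - \<alpha>) * x) * (1 - x) ^ 4 - (1 - \<alpha> + 4 * x + (1 + \<alpha>) * x ^ 2) \<le> 0"
      unfolding G using p by (simp add: mult_nonneg_nonpos) }
qed

theorem corollary3p4:
  fixes \<alpha> r0 :: real
  assumes "0 \<le> \<alpha>" and "\<alpha> < 1"
    and "0 < r0" and "r0 < 1"
    and "2 * (1 - \<alpha> + 2 * (2 - \<alpha>) * r0) * (1 - r0) ^ 4 = 1 - \<alpha> + 4 * r0 + (1 + \<alpha>) * r0 ^ 2"
  shows "(\<forall>f\<in>classF. \<forall>z. norm z \<le> r0 \<longrightarrow>
            deriv f z \<noteq> 0 \<and> norm (z * deriv (deriv f) z / deriv f z) \<le> 1 - \<alpha>)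
       \<and> (\<forall>r>r0. \<exists>f\<in>classF. \<exists>z. norm z \<le> r \<and> norm z < 1 \<and>
            (deriv f z = 0 \<or> norm (z * deriv (deriv f) z / deriv f z) > 1 - \<alpha>))
       \<and> radius_convexity_order \<alpha> classF = r0
       \<and> (\<alpha> = 1/2 \<longrightarrow> radius_uniform_convexity classF = r0
                        \<and> 0.1254285 \<le> r0 \<and> r0 < 0.1254295)"
proof -
  note P1 = part1[OF assms]
  note W = witness[OF assms]
  have I: "\<forall>f\<in>classF. \<forall>z. norm z \<le> r0 \<longrightarrow>
            deriv f z \<noteq> 0 \<and> norm (z * deriv (deriv f) z / deriv f z) \<le> 1 - \<alpha>"
    using P1 by blast
  have II: "\<forall>r>r0. \<exists>f\<in>classF. \<exists>z. norm z \<le> r \<and> norm z < 1 \<and>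
            (deriv f z = 0 \<or> norm (z * deriv (deriv f) z / deriv f z) > 1 - \<alpha>)"
  proof (intro allI impI)
    fix r assume r: "r0 < r"
    obtain t where t: "0 \<le> t" "t < r" "t < 1" and
      d: "deriv f0 (of_real t) = 0 \<or> (\<exists>c. c > 1 - \<alpha> \<and>
       of_real t * deriv (deriv f0) (of_real t) / deriv f0 (of_real t) = - of_real c)"
      using W[OF r] by blast
    have "norm (complex_of_real t) \<le> r \<and> norm (complex_of_real t) < 1 \<and>
      (deriv f0 (of_real t) = 0 \<or> norm (of_real t * deriv (deriv f0) (of_real t) / deriv f0 (of_real t)) > 1 - \<alpha>)"
      using t d assms(2) by auto
    thus "\<exists>f\<in>classF. \<exists>z. norm z \<le> r \<and> norm z < 1 \<and>
            (deriv f z = 0 \<or> norm (z * deriv (deriv f) z / deriv f z) > 1 - \<alpha>)"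
      using f0_classF by blast
  qed
  have lowRe: "Re (1 + w) \<ge> 1 - norm w" for w :: complex
    using abs_Re_le_cmod[of w] by simp
  have III: "radius_convexity_order \<alpha> classF = r0"
    unfolding radius_convexity_order_def
  proof (rule cSup_eq_maximum)
    show "r0 \<in> {r. 0 < r \<and> r \<le> 1 \<and>
      (\<forall>f\<in>classF. \<forall>z::complex. norm z < r \<longrightarrow>
          deriv f z \<noteq> 0 \<and> Re (1 + z * deriv (deriv f) z / deriv f z) > \<alpha>)}"
    proof (intro CollectI conjI ballI allI impI)
      fix f and z :: complex assume f: "f \<in> classF" and z: "norm z < r0"
      show "deriv f z \<noteq> 0" using P1(1)[OF f] z by simp
      have "norm (z * deriv (deriv f) z / deriv f z) < 1 - \<alpha>" using P1(3)[OF f] z by simp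
      thus "Re (1 + z * deriv (deriv f) z / deriv f z) > \<alpha>"
        using lowRe[of "z * deriv (deriv f) z / deriv f z"] by linarith
    qed (use assms in auto)
  next
    fix x assume "x \<in> {r. 0 < r \<and> r \<le> 1 \<and>
      (\<forall>f\<in>classF. \<forall>z::complex. norm z < r \<longrightarrow>
          deriv f z \<noteq> 0 \<and> Re (1 + z * deriv (deriv f) z / deriv f z) > \<alpha>)}"
    hence xP: "\<forall>z::complex. norm z < x \<longrightarrow> deriv f0 z \<noteq> 0 \<and> Re (1 + z * deriv (deriv f0) z / deriv f0 z) > \<alpha>"
      using f0_classF by blast
    show "x \<le> r0"
    proof (rule ccontr)
      assume "\<not> x \<le> r0"
      then obtain t where t: "0 \<le> t" "t < x" "t < 1" and
        d: "deriv f0 (of_real t) = 0 \<or> (\<exists>c. c > 1 - \<alpha> \<and>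
         of_real t * deriv (deriv f0) (of_real t) / deriv f0 (of_real t) = - of_real c)"
        using W[of x] by auto
      have xt: "deriv f0 (of_real t) \<noteq> 0 \<and> Re (1 + of_real t * deriv (deriv f0) (of_real t) / deriv f0 (of_real t)) > \<alpha>"
        using xP t by auto
      thus False using d by auto
    qed
  qed
  have IV: "\<alpha> = 1/2 \<longrightarrow> radius_uniform_convexity classF = r0 \<and> 0.1254285 \<le> r0 \<and> r0 < 0.1254295"
  proof
    assume ah: "\<alpha> = 1/2"
    have "radius_uniform_convexity classF = r0"
      unfolding radius_uniform_convexity_def
    proof (rule cSup_eq_maximum)
      show "r0 \<in> {r. 0 < r \<and> r \<le> 1 \<and>
        (\<forall>f\<in>classF. \<forall>z::complex. norm z < r \<longrightarrow>
            deriv f z \<noteq> 0 \<and> Re (1 + z * deriv (deriv f) z / deriv f z) > norm (z * deriv (deriv f) z / deriv f z))}"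
      proof (intro CollectI conjI ballI allI impI)
        fix f and z :: complex assume f: "f \<in> classF" and z: "norm z < r0"
        show "deriv f z \<noteq> 0" using P1(1)[OF f] z by simp
        have "norm (z * deriv (deriv f) z / deriv f z) < 1/2" using P1(3)[OF f] z ah by simp
        thus "Re (1 + z * deriv (deriv f) z / deriv f z) > norm (z * deriv (deriv f) z / deriv f z)"
          using lowRe[of "z * deriv (deriv f) z / deriv f z"] by linarith
      qed (use assms in auto)
    next
      fix x assume "x \<in> {r. 0 < r \<and> r \<le> 1 \<and>
        (\<forall>f\<in>classF. \<forall>z::complex. norm z < r \<longrightarrow>
            deriv f z \<noteq> 0 \<and> Re (1 + z * deriv (deriv f) z / deriv f z) > norm (z * deriv (deriv f) z / deriv f z))}"
      hence xP: "\<forall>z::complex. norm z < x \<longrightarrow> deriv f0 z \<noteq> 0 \<and> Re (1 + z * deriv (deriv f0) z / deriv f0 z) > norm (z * deriv (deriv f0) z / deriv f0 z)"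
        using f0_classF by blast
      show "x \<le> r0"
      proof (rule ccontr)
        assume "\<not> x \<le> r0"
        then obtain t where t: "0 \<le> t" "t < x" "t < 1" and
          d: "deriv f0 (of_real t) = 0 \<or> (\<exists>c. c > 1 - \<alpha> \<and>
           of_real t * deriv (deriv f0) (of_real t) / deriv f0 (of_real t) = - of_real c)"
          using W[of x] by auto
        have xt: "deriv f0 (of_real t) \<noteq> 0 \<and> Re (1 + of_real t * deriv (deriv f0) (of_real t) / deriv f0 (of_real t)) > norm (of_real t * deriv (deriv f0) (of_real t) / deriv f0 (of_real t))"
          using xP t by auto
        thus False using d ah by auto
      qed
    qed
    moreover have "0.1254285 \<le> r0"
    proof (rule ccontr)
      assume "\<not> 0.1254285 \<le> r0"
      hence "2 * (1 - \<alpha> + 2 * (2 - \<alpha>) * 0.1254285) * (1 - 0.1254285) ^ 4 - (1 - \<alpha> + 4 * 0.1254285 + (1 + \<alpha>) * 0.1254285 ^ 2) \<le> (0::real)"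
        using g_sign(2)[OF assms, of "0.1254285"] by simp
      thus False using ah by (simp add: power_divide)
    qed
    moreover have "r0 < 0.1254295"
    proof (rule ccontr)
      assume "\<not> r0 < 0.1254295"
      hence "2 * (1 - \<alpha> + 2 * (2 - \<alpha>) * 0.1254295) * (1 - 0.1254295) ^ 4 - (1 - \<alpha> + 4 * 0.1254295 + (1 + \<alpha>) * 0.1254295 ^ 2) \<ge> (0::real)"
        using g_sign(1)[OF assms, of "0.1254295"] by simp
      thus False using ah by (simp add: power_divide)
    qed
    ultimately show "radius_uniform_convexity classF = r0 \<and> 0.1254285 \<le> r0 \<and> r0 < 0.1254295" by simp
  qed
  show ?thesis using I II III IV by blast
qed

end
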